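(* Let $M$ be a model with borders and $U\subseteq M$ an up-set. The following are equivalent: (1) there is a $(\wedge,\to)$-formula $\varphi$ with $v(\varphi)=U$; (2) for all $x\in M$: if for every $z\in M^s$ with $z\ge x$ there exists $y\in U\cap M^s$ bisimilar to $z$ in $M^s$, then $x\in U$; (3) for all $x\in M$: (a) if all separated points $z\ge x$ are in $U$, then $x\in U$; and (b) if $x\in M^s$ and there exists $x'\in U\cap M^s$ bisimilar to $x$ in $M^s$, then $x\in U$.
   Context: Fix $n\ge1$ and variables $p_1,\dots,p_n$. A model is $(M,\le,c)$, $(M,\le)$ a poset, $c:M\to\{0,1\}^n$ order-preserving (componentwise order), with intuitionistic Kripke semantics ($x\models p_i$ iff $c(x)_i=1$; $x\models\varphi\to\psi$ iff every $y\ge x$ satisfying $\varphi$ satisfies $\psi$). $v(\varphi)$ is the set of points of $M$ satisfying $\varphi$. A $(\wedge,\to)$-formula uses only $\wedge,\to$. A point $x$ is a $q$-border point if $x\not\models q$ and all $y>x$ satisfy $q$; separated if it is a $q$-border point for some variable $q$. $M^s$ is the set of separated points with restricted order and colouring, a model in its own right, all of whose chains have at most $n$ elements. $M$ has borders if for every variable $p$ and $x$ with $x\not\models p$ there is a $p$-border point $y\ge x$. Two points of $M^s$ are bisimilar in $M^s$ if they are related by an intuitionistic bisimulation of the model $M^s$ (colour-preserving, with forth and back conditions for $\le$); equivalently, since $M^s$ has finite depth, they have the same image under the unique p-morphism from $M^s$ to the $n$-universal model $U(n)$. *)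

theory Defs
  imports Main
begin

text \<open>Variables p_1,...,p_n are represented by indices 0,...,n-1.
A model is a carrier set M with a partial order le on M and a colouring
c :: 'a => nat => bool (c x i = True means x satisfies p_i), monotone in the
order for every i < n.\<close>

definition is_model :: "nat \<Rightarrow> 'a set \<Rightarrow> ('a \<Rightarrow> 'a \<Rightarrow> bool) \<Rightarrow> ('a \<Rightarrow> nat \<Rightarrow> bool) \<Rightarrow> bool" where
  "is_model n M le c \<longleftrightarrow>
     (\<forall>x\<in>M. le x x) \<and>
     (\<forall>x\<in>M. \<forall>y\<in>M. \<forall>z\<in>M. le x y \<longrightarrow> le y z \<longrightarrow> le x z) \<and>
     (\<forall>x\<in>M. \<forall>y\<in>M. le x y \<longrightarrow> le y x \<longrightarrow> x = y) \<and>
     (\<forall>x\<in>M. \<forall>y\<in>M. \<forall>i<n. le x y \<longrightarrow> c x i \<longrightarrow> c y i)"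

datatype frm = Var nat | Conj frm frm | Imp frm frm

fun vars :: "frm \<Rightarrow> nat set" where
  "vars (Var i) = {i}"
| "vars (Conj a b) = vars a \<union> vars b"
| "vars (Imp a b) = vars a \<union> vars b"

fun sat :: "'a set \<Rightarrow> ('a \<Rightarrow> 'a \<Rightarrow> bool) \<Rightarrow> ('a \<Rightarrow> nat \<Rightarrow> bool) \<Rightarrow> 'a \<Rightarrow> frm \<Rightarrow> bool" where
  "sat M le c x (Var i) = c x i"
| "sat M le c x (Conj a b) = (sat M le c x a \<and> sat M le c x b)"
| "sat M le c x (Imp a b) = (\<forall>y\<in>M. le x y \<longrightarrow> sat M le c y a \<longrightarrow> sat M le c y b)"

definition val :: "'a set \<Rightarrow> ('a \<Rightarrow> 'a \<Rightarrow> bool) \<Rightarrow> ('a \<Rightarrow> nat \<Rightarrow> bool) \<Rightarrow> frm \<Rightarrow> 'a set" where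
  "val M le c \<phi> = {x\<in>M. sat M le c x \<phi>}"

definition border_point :: "'a set \<Rightarrow> ('a \<Rightarrow> 'a \<Rightarrow> bool) \<Rightarrow> ('a \<Rightarrow> nat \<Rightarrow> bool) \<Rightarrow> nat \<Rightarrow> 'a \<Rightarrow> bool" where
  "border_point M le c q x \<longleftrightarrow> x \<in> M \<and> \<not> c x q \<and> (\<forall>y\<in>M. le x y \<and> y \<noteq> x \<longrightarrow> c y q)"

definition separated :: "nat \<Rightarrow> 'a set \<Rightarrow> ('a \<Rightarrow> 'a \<Rightarrow> bool) \<Rightarrow> ('a \<Rightarrow> nat \<Rightarrow> bool) \<Rightarrow> 'a \<Rightarrow> bool" where
  "separated n M le c x \<longleftrightarrow> (\<exists>q<n. border_point M le c q x)"

definition sep_pts :: "nat \<Rightarrow> 'a set \<Rightarrow> ('a \<Rightarrow> 'a \<Rightarrow> bool) \<Rightarrow> ('a \<Rightarrow> nat \<Rightarrow> bool) \<Rightarrow> 'a set" where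
  "sep_pts n M le c = {x\<in>M. separated n M le c x}"

definition has_borders :: "nat \<Rightarrow> 'a set \<Rightarrow> ('a \<Rightarrow> 'a \<Rightarrow> bool) \<Rightarrow> ('a \<Rightarrow> nat \<Rightarrow> bool) \<Rightarrow> bool" where
  "has_borders n M le c \<longleftrightarrow>
     (\<forall>p<n. \<forall>x\<in>M. \<not> c x p \<longrightarrow> (\<exists>y\<in>M. le x y \<and> border_point M le c p y))"

definition is_bisim :: "nat \<Rightarrow> 'a set \<Rightarrow> ('a \<Rightarrow> 'a \<Rightarrow> bool) \<Rightarrow> ('a \<Rightarrow> nat \<Rightarrow> bool) \<Rightarrow> ('a \<Rightarrow> 'a \<Rightarrow> bool) \<Rightarrow> bool" where
  "is_bisim n S le c R \<longleftrightarrow>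
     (\<forall>x y. R x y \<longrightarrow> x \<in> S \<and> y \<in> S) \<and>
     (\<forall>x y. R x y \<longrightarrow> (\<forall>i<n. c x i = c y i)) \<and>
     (\<forall>x y x'. R x y \<longrightarrow> x' \<in> S \<longrightarrow> le x x' \<longrightarrow> (\<exists>y'\<in>S. le y y' \<and> R x' y')) \<and>
     (\<forall>x y y'. R x y \<longrightarrow> y' \<in> S \<longrightarrow> le y y' \<longrightarrow> (\<exists>x'\<in>S. le x x' \<and> R x' y'))"

definition bisimilar_s :: "nat \<Rightarrow> 'a set \<Rightarrow> ('a \<Rightarrow> 'a \<Rightarrow> bool) \<Rightarrow> ('a \<Rightarrow> nat \<Rightarrow> bool) \<Rightarrow> 'a \<Rightarrow> 'a \<Rightarrow> bool" where
  "bisimilar_s n M le c x y \<longleftrightarrow> (\<exists>R. is_bisim n (sep_pts n M le c) le c R \<and> R x y)"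

definition up_set :: "'a set \<Rightarrow> ('a \<Rightarrow> 'a \<Rightarrow> bool) \<Rightarrow> 'a set \<Rightarrow> bool" where
  "up_set M le U \<longleftrightarrow> U \<subseteq> M \<and> (\<forall>x\<in>U. \<forall>y\<in>M. le x y \<longrightarrow> y \<in> U)"

end

theory Submission
  imports Defs
begin

definition fm :: "nat \<Rightarrow> frm \<Rightarrow> bool" where "fm n \<phi> \<longleftrightarrow> vars \<phi> \<subseteq> {..<n}"

lemma fm_simps[simp]: "fm n (Var i) \<longleftrightarrow> i < n" "fm n (Conj a b) \<longleftrightarrow> fm n a \<and> fm n b"
  "fm n (Imp a b) \<longleftrightarrow> fm n a \<and> fm n b"
  by (auto simp: fm_def)

lemma conj_exists:
  assumes "n \<ge> 1" "finite F" "\<forall>\<phi>\<in>F. fm n \<phi>"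
  shows "\<exists>\<psi>. fm n \<psi> \<and> (\<forall>x. sat M le c x \<psi> \<longleftrightarrow> (\<forall>\<phi>\<in>F. sat M le c x \<phi>))"
  using assms(2,3)
proof (induction F rule: finite_induct)
  case empty
  show ?case by (rule exI[of _ "Imp (Var 0) (Var 0)"]) (use assms(1) in auto)
next
  case (insert a F)
  then obtain \<psi> where "fm n \<psi>" "\<forall>x. sat M le c x \<psi> \<longleftrightarrow> (\<forall>\<phi>\<in>F. sat M le c x \<phi>)" by auto
  then show ?case using insert by (intro exI[of _ "Conj a \<psi>"]) auto
qed

locale kmodel =
  fixes n :: nat and M :: "'a set" and le :: "'a \<Rightarrow> 'a \<Rightarrow> bool" and c :: "'a \<Rightarrow> nat \<Rightarrow> bool"
  assumes n1: "n \<ge> 1" and mdl: "is_model n M le c" and bord: "has_borders n M le c"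
begin

abbreviation S where "S \<equiv> sep_pts n M le c"
abbreviation sats where "sats x \<phi> \<equiv> sat M le c x \<phi>"

definition Th where "Th x = {\<phi>. fm n \<phi> \<and> sats x \<phi>}"

lemma refl: "x \<in> M \<Longrightarrow> le x x" using mdl by (simp add: is_model_def)
lemma trans: "x \<in> M \<Longrightarrow> y \<in> M \<Longrightarrow> z \<in> M \<Longrightarrow> le x y \<Longrightarrow> le y z \<Longrightarrow> le x z"
  using mdl unfolding is_model_def by blast
lemma antisym: "x \<in> M \<Longrightarrow> y \<in> M \<Longrightarrow> le x y \<Longrightarrow> le y x \<Longrightarrow> x = y"
  using mdl unfolding is_model_def by blast
lemma mono: "x \<in> M \<Longrightarrow> y \<in> M \<Longrightarrow> i < n \<Longrightarrow> le x y \<Longrightarrow> c x i \<Longrightarrow> c y i"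
  using mdl unfolding is_model_def by blast

lemma S_M: "x \<in> S \<Longrightarrow> x \<in> M" by (simp add: sep_pts_def)
lemma S_border: "x \<in> S \<Longrightarrow> \<exists>q<n. border_point M le c q x"
  by (simp add: sep_pts_def separated_def)

lemma persist: "fm n \<phi> \<Longrightarrow> x\<in>M \<Longrightarrow> y\<in>M \<Longrightarrow> le x y \<Longrightarrow> sats x \<phi> \<Longrightarrow> sats y \<phi>"
proof (induction \<phi> arbitrary: x y)
  case (Var i) then show ?case using mono by auto
next
  case (Conj a b) then show ?case by auto
next
  case (Imp a b)
  show ?case
  proof (simp only: sat.simps, intro ballI impI)
    fix z assume "z \<in> M" "le y z" "sats z a"
    then have "le x z" using trans[of x y z] Imp.prems by blast
    then show "sats z b" using Imp.prems \<open>z \<in> M\<close> \<open>sats z a\<close> by simp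
  qed
qed

lemma down: "fm n \<phi> \<Longrightarrow> x\<in>M \<Longrightarrow> \<not> sats x \<phi> \<Longrightarrow> \<exists>z\<in>S. le x z \<and> \<not> sats z \<phi>"
proof (induction \<phi> arbitrary: x)
  case (Var i)
  then have "i < n" "\<not> c x i" by auto
  with bord \<open>x \<in> M\<close> obtain y where "y \<in> M" "le x y" "border_point M le c i y"
    unfolding has_borders_def by blast
  then show ?case using \<open>i<n\<close> by (auto simp: sep_pts_def separated_def border_point_def)
next
  case (Conj a b) then show ?case by auto
next
  case (Imp a b)
  then obtain y where y: "y \<in> M" "le x y" "sats y a" "\<not> sats y b" by auto
  with Imp obtain z where z: "z \<in> S" "le y z" "\<not> sats z b" by auto
  have zM: "z \<in> M" using z S_M by auto
  have "sats z a" using persist[of a y z] y z zM Imp by auto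
  moreover have "le x z" using trans[of x y z] Imp y z zM by auto
  ultimately show ?case using z zM refl by auto
qed

lemma imp_sp: "x \<in> M \<Longrightarrow> fm n a \<Longrightarrow> fm n b \<Longrightarrow>
   sats x (Imp a b) \<longleftrightarrow> (\<forall>y\<in>S. le x y \<longrightarrow> sats y a \<longrightarrow> sats y b)"
proof
  assume "x \<in> M" "sats x (Imp a b)" then show "\<forall>y\<in>S. le x y \<longrightarrow> sats y a \<longrightarrow> sats y b"
    using S_M by auto
next
  assume A: "x \<in> M" "fm n a" "fm n b" "\<forall>y\<in>S. le x y \<longrightarrow> sats y a \<longrightarrow> sats y b"
  show "sats x (Imp a b)"
  proof (simp, intro ballI impI, rule ccontr)
    fix y assume y: "y \<in> M" "le x y" "sats y a" "\<not> sats y b"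
    then obtain w where w: "w \<in> S" "le y w" "\<not> sats w b" using down A by blast
    have wM: "w \<in> M" using w S_M by auto
    have "sats w a" using persist[of a y w] y w wM A by auto
    moreover have "le x w" using trans[of x y w] A y w wM by auto
    ultimately show False using A w by auto
  qed
qed

definition rk where "rk x = card {i. i < n \<and> \<not> c x i}"

lemma rk_less: assumes "x \<in> S" "y \<in> M" "le x y" "y \<noteq> x" shows "rk y < rk x"
proof -
  obtain q where q: "q < n" "border_point M le c q x" using S_border assms by blast
  have xM: "x \<in> M" using assms S_M by auto
  have "c y q" "\<not> c x q" using q assms by (auto simp: border_point_def)
  then have "{i. i < n \<and> \<not> c y i} \<subset> {i. i < n \<and> \<not> c x i}"
    using mono[OF xM assms(2) _ assms(3)] q by auto
  then show ?thesis unfolding rk_def by (rule psubset_card_mono[rotated]) auto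
qed

lemma rk_le: "rk x \<le> n"
proof -
  have "rk x \<le> card {..<n}" unfolding rk_def by (rule card_mono) auto
  then show ?thesis by simp
qed

lemma rk_pos: "x \<in> S \<Longrightarrow> rk x > 0"
proof -
  assume "x \<in> S"
  then obtain q where q: "q < n" "border_point M le c q x" using S_border by blast
  then have "q \<in> {i. i < n \<and> \<not> c x i}" by (auto simp: border_point_def)
  then show ?thesis unfolding rk_def by (subst card_gt_0_iff) auto
qed

definition col where "col x = {i. i < n \<and> c x i}"
definition ST where "ST x = Th ` {y\<in>S. le x y \<and> y \<noteq> x}"

lemma imp_strict: assumes "x \<in> S" "fm n a" "fm n b"
  shows "sats x (Imp a b) \<longleftrightarrow> (sats x a \<longrightarrow> sats x b) \<and> (\<forall>t\<in>ST x. a \<in> t \<longrightarrow> b \<in> t)"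
proof -
  have xM: "x \<in> M" using assms S_M by auto
  have "sats x (Imp a b) \<longleftrightarrow> (\<forall>y\<in>S. le x y \<longrightarrow> sats y a \<longrightarrow> sats y b)"
    using imp_sp xM assms by blast
  also have "\<dots> \<longleftrightarrow> (sats x a \<longrightarrow> sats x b) \<and> (\<forall>y\<in>S. le x y \<and> y \<noteq> x \<longrightarrow> sats y a \<longrightarrow> sats y b)"
    using assms refl xM by blast
  also have "\<dots> \<longleftrightarrow> (sats x a \<longrightarrow> sats x b) \<and> (\<forall>t\<in>ST x. a \<in> t \<longrightarrow> b \<in> t)"
    using assms by (auto simp: ST_def Th_def)
  finally show ?thesis .
qed

lemma th_det: assumes "x \<in> S" "x' \<in> S" "col x = col x'" "ST x = ST x'" shows "Th x = Th x'"
proof -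
  have "fm n \<phi> \<Longrightarrow> sats x \<phi> \<longleftrightarrow> sats x' \<phi>" for \<phi>
  proof (induction \<phi>)
    case (Var i) then show ?case using assms(3) by (auto simp: col_def set_eq_iff)
  next
    case (Conj a b) then show ?case by auto
  next
    case (Imp a b) then show ?case using imp_strict[OF assms(1)] imp_strict[OF assms(2)] assms(4)
      by auto
  qed
  then show ?thesis by (auto simp: Th_def)
qed

lemma fin_r: "finite (Th ` {x\<in>S. rk x \<le> r})"
proof (induction r)
  case 0
  have "{x\<in>S. rk x \<le> 0} = {}" using rk_pos by fastforce
  then show ?case by (metis finite.emptyI image_empty)
next
  case (Suc r)
  define A where "A = {x\<in>S. rk x \<le> Suc r}"
  define P where "P x = (col x, ST x)" for x
  define g where "g p = Th (SOME x. x \<in> A \<and> P x = p)" for p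
  have "P ` A \<subseteq> Pow {..<n} \<times> Pow (Th ` {x\<in>S. rk x \<le> r})"
  proof
    fix p assume "p \<in> P ` A"
    then obtain x where x: "x \<in> A" "p = P x" by auto
    have "ST x \<subseteq> Th ` {x\<in>S. rk x \<le> r}"
    proof
      fix t assume "t \<in> ST x"
      then obtain y where y: "y \<in> S" "le x y" "y \<noteq> x" "t = Th y" by (auto simp: ST_def)
      have "rk y < rk x" using rk_less[of x y] x y S_M by (auto simp: A_def)
      then show "t \<in> Th ` {x\<in>S. rk x \<le> r}" using x y by (auto simp: A_def)
    qed
    then show "p \<in> Pow {..<n} \<times> Pow (Th ` {x\<in>S. rk x \<le> r})"
      using x by (auto simp: P_def col_def)
  qed
  then have fP: "finite (P ` A)" using Suc by (meson finite_Pow_iff finite_SigmaI finite_lessThan finite_subset)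
  have "Th ` A \<subseteq> g ` (P ` A)"
  proof
    fix t assume "t \<in> Th ` A"
    then obtain x where x: "x \<in> A" "t = Th x" by auto
    let ?x = "SOME y. y \<in> A \<and> P y = P x"
    have "?x \<in> A \<and> P ?x = P x" by (rule someI[of _ x]) (use x in auto)
    then have "Th ?x = Th x" using th_det[of ?x x] x by (auto simp: A_def P_def)
    then show "t \<in> g ` (P ` A)" using x by (auto simp: g_def)
  qed
  then show ?case using fP by (metis A_def finite_imageI finite_subset)
qed

lemma finT: "finite (Th ` S)"
proof -
  have "S = {x\<in>S. rk x \<le> n}" using rk_le by auto
  then show ?thesis using fin_r[of n] by simp
qed

lemma beta: assumes "z \<in> S"
  shows "\<exists>\<beta>. fm n \<beta> \<and> sats z \<beta> \<and> (\<forall>v\<in>S. sats v \<beta> \<longrightarrow> Th z \<subseteq> Th v)"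
proof -
  define h where "h t = (SOME \<phi>. \<phi> \<in> Th z \<and> \<phi> \<notin> t)" for t
  define F where "F = h ` {t \<in> Th ` S. \<not> Th z \<subseteq> t}"
  have hF: "h t \<in> Th z \<and> h t \<notin> t" if "\<not> Th z \<subseteq> t" for t
    unfolding h_def by (rule someI_ex) (use that in auto)
  have fF: "finite F" unfolding F_def by (rule finite_imageI) (rule finite_subset[OF _ finT], blast)
  have fmF: "\<forall>\<phi>\<in>F. fm n \<phi>"
  proof
    fix \<phi> assume "\<phi> \<in> F"
    then obtain t where "\<not> Th z \<subseteq> t" "\<phi> = h t" unfolding F_def by blast
    then show "fm n \<phi>" using hF[of t] by (simp add: Th_def)
  qed
  obtain \<psi> where \<psi>: "fm n \<psi>" "\<forall>x. sats x \<psi> \<longleftrightarrow> (\<forall>\<phi>\<in>F. sats x \<phi>)"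
    using conj_exists[OF n1 fF fmF, of M le c] by (elim exE conjE)
  have "\<forall>\<phi>\<in>F. sats z \<phi>"
  proof
    fix \<phi> assume "\<phi> \<in> F"
    then obtain t where "\<not> Th z \<subseteq> t" "\<phi> = h t" unfolding F_def by blast
    then show "sats z \<phi>" using hF[of t] by (simp add: Th_def)
  qed
  then have "sats z \<psi>" using \<psi>(2) by blast
  moreover have "Th z \<subseteq> Th v" if "v \<in> S" "sats v \<psi>" for v
  proof (rule ccontr)
    assume "\<not> Th z \<subseteq> Th v"
    then have "h (Th v) \<in> F" using that unfolding F_def by blast
    then have "sats v (h (Th v))" using \<psi>(2) that(2) by blast
    moreover have "h (Th v) \<in> Th z" "h (Th v) \<notin> Th v" using hF[OF \<open>\<not> Th z \<subseteq> Th v\<close>] by auto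
    ultimately show False by (simp add: Th_def)
  qed
  ultimately show ?thesis using \<psi>(1) by blast
qed

lemma char: assumes "z \<in> S"
  shows "\<exists>\<chi>. fm n \<chi> \<and> \<not> sats z \<chi> \<and> (\<forall>v\<in>M. \<not> sats v \<chi> \<longrightarrow> (\<exists>w\<in>S. le v w \<and> Th w = Th z))"
proof -
  obtain q where q: "q < n" "border_point M le c q z" using S_border assms by blast
  obtain \<beta> where b: "fm n \<beta>" "sats z \<beta>" "\<forall>v\<in>S. sats v \<beta> \<longrightarrow> Th z \<subseteq> Th v" using beta assms by blast
  have zM: "z \<in> M" using assms S_M by auto
  have "\<not> sats z (Imp \<beta> (Var q))" using b q zM refl by (auto simp: border_point_def)
  moreover have "\<exists>w\<in>S. le v w \<and> Th w = Th z" if v: "v \<in> M" "\<not> sats v (Imp \<beta> (Var q))" for v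
  proof -
    obtain v' where v': "v' \<in> M" "le v v'" "sats v' \<beta>" "\<not> c v' q" using v by auto
    obtain w where w: "w \<in> S" "le v' w" "\<not> c w q" using down[of "Var q" v'] v' q by auto
    have wM: "w \<in> M" using w S_M by auto
    have "sats w \<beta>" using persist[of \<beta> v' w] b v' w wM by auto
    then have sub: "Th z \<subseteq> Th w" using b w by auto
    have "Th w \<subseteq> Th z"
    proof
      fix \<phi> assume "\<phi> \<in> Th w"
      then have \<phi>: "fm n \<phi>" "sats w \<phi>" by (auto simp: Th_def)
      show "\<phi> \<in> Th z"
      proof (rule ccontr)
        assume "\<phi> \<notin> Th z"
        then have nz: "\<not> sats z \<phi>" using \<phi> by (auto simp: Th_def)
        have "sats z (Imp \<phi> (Var q))"
        proof (simp, intro ballI impI)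
          fix y assume "y \<in> M" "le z y" "sats y \<phi>"
          then show "c y q" using q nz by (auto simp: border_point_def)
        qed
        then have "Imp \<phi> (Var q) \<in> Th z" using \<phi> q by (simp add: Th_def)
        with sub have "Imp \<phi> (Var q) \<in> Th w" by blast
        then show False using \<phi> w wM refl by (auto simp: Th_def)
      qed
    qed
    then show ?thesis using sub w v v' wM trans[of v v' w] by auto
  qed
  ultimately show ?thesis using b q by (intro exI[of _ "Imp \<beta> (Var q)"]) auto
qed

lemma th_bisim: "is_bisim n S le c (\<lambda>a b. a \<in> S \<and> b \<in> S \<and> Th a = Th b)"
  unfolding is_bisim_def
proof (intro conjI allI impI)
  fix x y i assume A: "x \<in> S \<and> y \<in> S \<and> Th x = Th y" "i < n"
  have "(fm n (Var i) \<and> sats x (Var i)) = (fm n (Var i) \<and> sats y (Var i))"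
    using A(1) unfolding Th_def set_eq_iff mem_Collect_eq by blast
  with A show "c x i = c y i" by simp
next
  fix x y x' assume A: "x \<in> S \<and> y \<in> S \<and> Th x = Th y" "x' \<in> S" "le x x'"
  have xS: "x \<in> S" and yS: "y \<in> S" and Txy: "Th x = Th y" using A(1) by auto
  obtain \<chi> where ch: "fm n \<chi>" "\<not> sats x' \<chi>" "\<forall>v\<in>M. \<not> sats v \<chi> \<longrightarrow> (\<exists>w\<in>S. le v w \<and> Th w = Th x')"
    using char[OF A(2)] by blast
  have xM: "x \<in> M" and x'M: "x' \<in> M" and yM: "y \<in> M" using xS yS A(2) S_M by auto
  have "\<not> sats x \<chi>" using persist[OF ch(1) xM x'M A(3)] ch(2) by blast
  then have "\<chi> \<notin> Th x" by (simp add: Th_def)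
  then have "\<chi> \<notin> Th y" using Txy by simp
  then have "\<not> sats y \<chi>" using ch(1) by (simp add: Th_def)
  then obtain w where w: "w \<in> S" "le y w" "Th w = Th x'" using ch(3) yM by blast
  then show "\<exists>y'\<in>S. le y y' \<and> x' \<in> S \<and> y' \<in> S \<and> Th x' = Th y'" using A(2)
    by (intro bexI[of _ w]) simp_all
next
  fix x y y' assume A: "x \<in> S \<and> y \<in> S \<and> Th x = Th y" "y' \<in> S" "le y y'"
  have xS: "x \<in> S" and yS: "y \<in> S" and Txy: "Th x = Th y" using A(1) by auto
  obtain \<chi> where ch: "fm n \<chi>" "\<not> sats y' \<chi>" "\<forall>v\<in>M. \<not> sats v \<chi> \<longrightarrow> (\<exists>w\<in>S. le v w \<and> Th w = Th y')"
    using char[OF A(2)] by blast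
  have xM: "x \<in> M" and y'M: "y' \<in> M" and yM: "y \<in> M" using xS yS A(2) S_M by auto
  have "\<not> sats y \<chi>" using persist[OF ch(1) yM y'M A(3)] ch(2) by blast
  then have "\<chi> \<notin> Th y" by (simp add: Th_def)
  then have "\<chi> \<notin> Th x" using Txy by simp
  then have "\<not> sats x \<chi>" using ch(1) by (simp add: Th_def)
  then obtain w where w: "w \<in> S" "le x w" "Th w = Th y'" using ch(3) xM by blast
  then show "\<exists>x'\<in>S. le x x' \<and> x' \<in> S \<and> y' \<in> S \<and> Th x' = Th y'" using A(2)
    by (intro bexI[of _ w]) simp_all
next
  fix x y assume "x \<in> S \<and> y \<in> S \<and> Th x = Th y" then show "x \<in> S" by simp
next
  fix x y assume "x \<in> S \<and> y \<in> S \<and> Th x = Th y" then show "y \<in> S" by simp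
qed

lemma th_bisimilar: "a \<in> S \<Longrightarrow> b \<in> S \<Longrightarrow> Th a = Th b \<Longrightarrow> bisimilar_s n M le c a b"
  unfolding bisimilar_s_def using th_bisim by blast

lemma invar: "is_bisim n S le c R \<Longrightarrow> fm n \<phi> \<Longrightarrow> R y z \<Longrightarrow> sats y \<phi> \<longleftrightarrow> sats z \<phi>"
proof (induction \<phi> arbitrary: y z)
  case (Var i) then show ?case by (auto simp: is_bisim_def)
next
  case (Conj a b) then show ?case by auto
next
  case (Imp a b)
  have yz: "y \<in> S" "z \<in> S" using Imp.prems by (auto simp: is_bisim_def)
  have fa: "fm n a" "fm n b" using Imp.prems by auto
  show ?case
  proof
    assume H: "sats y (Imp a b)"
    show "sats z (Imp a b)" unfolding imp_sp[OF S_M[OF yz(2)] fa]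
    proof (intro ballI impI)
      fix z' assume z': "z' \<in> S" "le z z'" "sats z' a"
      then obtain y' where y': "y' \<in> S" "le y y'" "R y' z'"
        using Imp.prems unfolding is_bisim_def by blast
      have "sats y' a" using Imp.IH(1)[OF Imp.prems(1) fa(1) y'(3)] z' by auto
      then have "sats y' b" using H y' S_M by auto
      then show "sats z' b" using Imp.IH(2)[OF Imp.prems(1) fa(2) y'(3)] by auto
    qed
  next
    assume H: "sats z (Imp a b)"
    show "sats y (Imp a b)" unfolding imp_sp[OF S_M[OF yz(1)] fa]
    proof (intro ballI impI)
      fix y' assume y': "y' \<in> S" "le y y'" "sats y' a"
      then obtain z' where z': "z' \<in> S" "le z z'" "R y' z'"
        using Imp.prems unfolding is_bisim_def by blast
      have "sats z' a" using Imp.IH(1)[OF Imp.prems(1) fa(1) z'(3)] y' by auto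
      then have "sats z' b" using H z' S_M by auto
      then show "sats y' b" using Imp.IH(2)[OF Imp.prems(1) fa(2) z'(3)] by auto
    qed
  qed
qed

end

theorem theorem3p19:
  fixes n :: nat and M :: "'a set" and le :: "'a \<Rightarrow> 'a \<Rightarrow> bool"
    and c :: "'a \<Rightarrow> nat \<Rightarrow> bool" and U :: "'a set"
  assumes "n \<ge> 1"
    and "is_model n M le c"
    and "has_borders n M le c"
    and "up_set M le U"
  defines "Ms \<equiv> sep_pts n M le c"
  shows "((\<exists>\<phi>. vars \<phi> \<subseteq> {..<n} \<and> val M le c \<phi> = U)
          \<longleftrightarrow>
          (\<forall>x\<in>M. (\<forall>z\<in>Ms. le x z \<longrightarrow> (\<exists>y\<in>U \<inter> Ms. bisimilar_s n M le c y z)) \<longrightarrow> x \<in> U))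
       \<and>
         ((\<forall>x\<in>M. (\<forall>z\<in>Ms. le x z \<longrightarrow> (\<exists>y\<in>U \<inter> Ms. bisimilar_s n M le c y z)) \<longrightarrow> x \<in> U)
          \<longleftrightarrow>
          (\<forall>x\<in>M. ((\<forall>z\<in>Ms. le x z \<longrightarrow> z \<in> U) \<longrightarrow> x \<in> U) \<and>
                  (x \<in> Ms \<longrightarrow> (\<exists>x'\<in>U \<inter> Ms. bisimilar_s n M le c x' x) \<longrightarrow> x \<in> U)))"
proof -
  interpret kmodel n M le c using assms(1-3) by unfold_locales
  have Ms: "Ms = sep_pts n M le c" by (simp add: Ms_def)
  have upM: "U \<subseteq> M" and up: "\<And>x y. x \<in> U \<Longrightarrow> y \<in> M \<Longrightarrow> le x y \<Longrightarrow> y \<in> U"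
    using assms(4) unfolding up_set_def by auto
  let ?A = "\<exists>\<phi>. vars \<phi> \<subseteq> {..<n} \<and> val M le c \<phi> = U"
  let ?B = "\<forall>x\<in>M. (\<forall>z\<in>Ms. le x z \<longrightarrow> (\<exists>y\<in>U \<inter> Ms. bisimilar_s n M le c y z)) \<longrightarrow> x \<in> U"
  let ?C = "\<forall>x\<in>M. ((\<forall>z\<in>Ms. le x z \<longrightarrow> z \<in> U) \<longrightarrow> x \<in> U) \<and>
                  (x \<in> Ms \<longrightarrow> (\<exists>x'\<in>U \<inter> Ms. bisimilar_s n M le c x' x) \<longrightarrow> x \<in> U)"
  have AB: "?B" if "?A"
  proof (intro ballI impI)
    fix x assume x: "x \<in> M" and H: "\<forall>z\<in>Ms. le x z \<longrightarrow> (\<exists>y\<in>U \<inter> Ms. bisimilar_s n M le c y z)"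
    obtain \<phi> where \<phi>: "fm n \<phi>" "val M le c \<phi> = U" using \<open>?A\<close> unfolding fm_def by blast
    show "x \<in> U"
    proof (rule ccontr)
      assume "x \<notin> U"
      then have "\<not> sats x \<phi>" using \<phi> x by (auto simp: val_def)
      then obtain z where z: "z \<in> S" "le x z" "\<not> sats z \<phi>" using down \<phi> x by blast
      then obtain y where y: "y \<in> U" "y \<in> S" "bisimilar_s n M le c y z" using H Ms by auto
      then obtain R where R: "is_bisim n S le c R" "R y z" by (auto simp: bisimilar_s_def)
      have "sats y \<phi>" using y \<phi> by (auto simp: val_def)
      then have "sats z \<phi>" using invar[OF R(1) \<phi>(1) R(2)] by simp
      then show False using z by simp
    qed
  qed
  have BA: "?A" if B: "?B"
  proof -
    define Sbad where "Sbad = {z\<in>S. \<not> (\<exists>y\<in>U \<inter> S. bisimilar_s n M le c y z)}"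
    define chi where "chi z = (SOME \<chi>. fm n \<chi> \<and> \<not> sats z \<chi> \<and>
        (\<forall>v\<in>M. \<not> sats v \<chi> \<longrightarrow> (\<exists>w\<in>S. le v w \<and> Th w = Th z)))" for z
    have chi: "fm n (chi z) \<and> \<not> sats z (chi z) \<and>
        (\<forall>v\<in>M. \<not> sats v (chi z) \<longrightarrow> (\<exists>w\<in>S. le v w \<and> Th w = Th z))" if "z \<in> S" for z
      unfolding chi_def by (rule someI_ex) (use char[OF that] in blast)
    define rep where "rep t = (SOME z. z \<in> Sbad \<and> Th z = t)" for t
    have rep: "rep t \<in> Sbad \<and> Th (rep t) = t" if "t \<in> Th ` Sbad" for t
      unfolding rep_def by (rule someI_ex) (use that in blast)
    define F where "F = (\<lambda>t. chi (rep t)) ` (Th ` Sbad)"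
    have "Th ` Sbad \<subseteq> Th ` S" by (auto simp: Sbad_def)
    then have "finite (Th ` Sbad)" by (rule finite_subset[OF _ finT])
    then have fF: "finite F" unfolding F_def by (rule finite_imageI)
    have fmF: "\<forall>\<phi>\<in>F. fm n \<phi>"
    proof
      fix \<phi> assume "\<phi> \<in> F"
      then obtain t where t: "t \<in> Th ` Sbad" "\<phi> = chi (rep t)" by (auto simp: F_def)
      have "rep t \<in> S" using rep[OF t(1)] by (simp add: Sbad_def)
      then show "fm n \<phi>" using chi t(2) by blast
    qed
    obtain \<psi> where \<psi>: "fm n \<psi>" "\<forall>x. sats x \<psi> \<longleftrightarrow> (\<forall>\<phi>\<in>F. sats x \<phi>)"
      using conj_exists[OF n1 fF fmF, of M le c] by (elim exE conjE)
    have "val M le c \<psi> = U"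
    proof
      show "val M le c \<psi> \<subseteq> U"
      proof
        fix x assume "x \<in> val M le c \<psi>"
        then have x: "x \<in> M" "sats x \<psi>" by (auto simp: val_def)
        show "x \<in> U"
        proof (rule ccontr)
          assume "x \<notin> U"
          then obtain z where z: "z \<in> S" "le x z" "\<not> (\<exists>y\<in>U \<inter> S. bisimilar_s n M le c y z)"
            using B x Ms by blast
          then have zb: "z \<in> Sbad" by (auto simp: Sbad_def)
          define z' where "z' = rep (Th z)"
          have z': "z' \<in> Sbad" "Th z' = Th z" using rep zb by (auto simp: z'_def)
          have z'S: "z' \<in> S" using z' by (auto simp: Sbad_def)
          have "chi z' \<in> F" using zb by (auto simp: F_def z'_def)
          then have "sats x (chi z')" using \<psi> x by auto
          then have "sats z (chi z')" using persist[of "chi z'" x z] chi[OF z'S] x z S_M by auto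
          then have "chi z' \<in> Th z" using chi[OF z'S] by (auto simp: Th_def)
          then have "chi z' \<in> Th z'" using z' by simp
          then show False using chi[OF z'S] by (auto simp: Th_def)
        qed
      qed
    next
      show "U \<subseteq> val M le c \<psi>"
      proof
        fix x assume xU: "x \<in> U"
        then have x: "x \<in> M" using upM by auto
        have "sats x \<phi>" if \<phi>F: "\<phi> \<in> F" for \<phi>
        proof -
          obtain t where t: "t \<in> Th ` Sbad" "\<phi> = chi (rep t)" using \<phi>F unfolding F_def by blast
          define z' where "z' = rep t"
          have z': "z' \<in> Sbad" using rep t by (auto simp: z'_def)
          have z'S: "z' \<in> S" using z' by (auto simp: Sbad_def)
          show ?thesis
          proof (rule ccontr)
            assume "\<not> sats x \<phi>"
            then have "\<not> sats x (chi z')" by (simp add: t(2) z'_def)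
            then obtain w where w: "w \<in> S" "le x w" "Th w = Th z'" using chi[OF z'S] x by blast
            have "w \<in> U" using up[OF xU _ w(2)] w S_M by auto
            moreover have "bisimilar_s n M le c w z'" using th_bisimilar w z'S by auto
            ultimately show False using z' w by (auto simp: Sbad_def)
          qed
        qed
        then show "x \<in> val M le c \<psi>" using \<psi> x by (auto simp: val_def)
      qed
    qed
    then show ?thesis using \<psi> unfolding fm_def by blast
  qed
  have BC: "?C" if B: "?B"
  proof (intro ballI conjI impI)
    fix x assume x: "x \<in> M" and H: "\<forall>z\<in>Ms. le x z \<longrightarrow> z \<in> U"
    have "\<forall>z\<in>Ms. le x z \<longrightarrow> (\<exists>y\<in>U \<inter> Ms. bisimilar_s n M le c y z)"
      using H th_bisimilar Ms by blast
    then show "x \<in> U" using B x by blast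
  next
    fix x assume x: "x \<in> M" "x \<in> Ms" and H: "\<exists>x'\<in>U \<inter> Ms. bisimilar_s n M le c x' x"
    then obtain x' R where x': "x' \<in> U" "is_bisim n S le c R" "R x' x"
      by (auto simp: bisimilar_s_def)
    have "\<forall>z\<in>Ms. le x z \<longrightarrow> (\<exists>y\<in>U \<inter> Ms. bisimilar_s n M le c y z)"
    proof (intro ballI impI)
      fix z assume z: "z \<in> Ms" "le x z"
      then obtain y where y: "y \<in> S" "le x' y" "R y z" using x' Ms unfolding is_bisim_def by blast
      have "y \<in> U" using up[OF x'(1) _ y(2)] y S_M by auto
      then show "\<exists>y\<in>U \<inter> Ms. bisimilar_s n M le c y z" using y x' Ms
        by (auto simp: bisimilar_s_def)
    qed
    then show "x \<in> U" using B x by blast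
  qed
  have CB: "?B" if C: "?C"
  proof (intro ballI impI)
    fix x assume x: "x \<in> M" and H: "\<forall>z\<in>Ms. le x z \<longrightarrow> (\<exists>y\<in>U \<inter> Ms. bisimilar_s n M le c y z)"
    have "\<forall>z\<in>Ms. le x z \<longrightarrow> z \<in> U"
    proof (intro ballI impI)
      fix z assume z: "z \<in> Ms" "le x z"
      then have zM: "z \<in> M" using Ms S_M by auto
      have "\<exists>y\<in>U \<inter> Ms. bisimilar_s n M le c y z" using H z by blast
      moreover have "z \<in> Ms \<longrightarrow> (\<exists>x'\<in>U \<inter> Ms. bisimilar_s n M le c x' z) \<longrightarrow> z \<in> U"
        using bspec[OF C zM] by (rule conjunct2)
      ultimately show "z \<in> U" using z by blast
    qed
    then show "x \<in> U" using bspec[OF C x] by blast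
  qed
  show ?thesis
    apply (rule conjI)
     apply (rule iffI)
      apply (erule AB)
     apply (erule BA)
    apply (rule iffI)
     apply (erule BC)
    apply (erule CB)
    done
qed

end
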